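(* Let $G$ be a group acting on the left by isometries on a geodesic semimetric space $X$ which has a basepoint. Suppose that the action is cocompact and that it is outward proper or inward proper. Then $G$ is finitely generated, and $G$, equipped with the word metric with respect to a finite generating set, is quasi-isometric to $X$. In particular, $X$ is a quasi-metric space.
   Context: Let $\mathbb{R}^\infty=\mathbb{R}^{\ge 0}\cup\{\infty\}$ with the usual order extended so that $\infty$ is largest, and $\infty+x=x+\infty=\infty$, $y\infty=\infty y=\infty$ for $y>0$. A semimetric space is a set $X$ with $d:X\times X\to\mathbb{R}^\infty$ such that $d(x,y)=0$ iff $x=y$, and $d(x,z)\le d(x,y)+d(y,z)$ (no symmetry required). A basepoint is $x_0\in X$ with $d(x_0,y)\neq\infty$ for all $y$; $X$ is strongly connected if every point is a basepoint. A path of length $n\ge 0$ from $x$ to $y$ is a map $p:[0,n]\to X$ with $p(0)=x$, $p(n)=y$, $d(p(a),p(b))\le b-a$ for $0\le a\le b\le n$; a geodesic from $x$ to $y$ (when $d(x,y)<\infty$) is a path of length $d(x,y)$; $X$ is geodesic if a geodesic exists between every $x,y$ with $d(x,y)<\infty$. An action by isometries means each $g\in G$ acts by a distance-preserving bijection. For $A,B\subseteq X$, $d(A,B)=\inf_{a\in A,b\in B}d(a,b)$. Out-ball: $\overrightarrow{\mathcal{B}}_r(x_0)=\{y: d(x_0,y)\le r\}$; in-ball: $\overleftarrow{\mathcal{B}}_r(x_0)=\{y: d(y,x_0)\le r\}$; strong ball $\mathcal{B}_r(x_0)=\overrightarrow{\mathcal{B}}_r(x_0)\cap\overleftarrow{\mathcal{B}}_r(x_0)$.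 The action is cocompact if some strong ball $B$ of finite radius has $\{gB:g\in G\}$ covering $X$. It is outward proper if for every out-ball $B$ of finite radius the set $\{g\in G: B\cap gB\neq\varnothing\}$ is finite; inward proper is the same with in-balls. A subset $T\subseteq X$ is $\mu$-quasi-dense if for every $x\in X$ there is $y\in T$ with $\max(d(x,y),d(y,x))\le\mu$. A map $f:X\to X'$ of semimetric spaces is a $(\lambda,\epsilon)$-quasi-isometric embedding ($1\le\lambda<\infty$, $0<\epsilon<\infty$) if $\frac1\lambda d(x,y)-\epsilon\le d'(f(x),f(y))\le\lambda d(x,y)+\epsilon$ for all $x,y$; it is a quasi-isometry if moreover $f(X)$ is $\mu$-quasi-dense for some finite $\mu\ge 0$; spaces are quasi-isometric if such a map exists. A semimetric space is quasi-metric if it is strongly connected and there are $1\le\lambda<\infty$, $0\le\epsilon<\infty$ with $d(y,x)\le\lambda d(x,y)+\epsilon$ for all $x,y$. For a group $G$ and a finite subset $S$ generating $G$ as a monoid, the word metric is $d_S(g,h)=\min\{n: h=gs_1\cdots s_n,\ s_i\in S\}$. *)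

theory Defs
  imports "HOL-Analysis.Analysis" "HOL-Algebra.Group_Action" "HOL-Library.Extended_Nonnegative_Real"
begin

definition semimetric :: "'a set \<Rightarrow> ('a \<Rightarrow> 'a \<Rightarrow> ennreal) \<Rightarrow> bool" where
  "semimetric X d \<longleftrightarrow>
     (\<forall>x\<in>X. \<forall>y\<in>X. d x y = 0 \<longleftrightarrow> x = y) \<and>
     (\<forall>x\<in>X. \<forall>y\<in>X. \<forall>z\<in>X. d x z \<le> d x y + d y z)"

definition is_basepoint :: "'a set \<Rightarrow> ('a \<Rightarrow> 'a \<Rightarrow> ennreal) \<Rightarrow> 'a \<Rightarrow> bool" where
  "is_basepoint X d x0 \<longleftrightarrow> x0 \<in> X \<and> (\<forall>y\<in>X. d x0 y \<noteq> \<infinity>)"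

definition has_basepoint :: "'a set \<Rightarrow> ('a \<Rightarrow> 'a \<Rightarrow> ennreal) \<Rightarrow> bool" where
  "has_basepoint X d \<longleftrightarrow> (\<exists>x0. is_basepoint X d x0)"

definition strongly_connected :: "'a set \<Rightarrow> ('a \<Rightarrow> 'a \<Rightarrow> ennreal) \<Rightarrow> bool" where
  "strongly_connected X d \<longleftrightarrow> (\<forall>x\<in>X. is_basepoint X d x)"

definition is_path :: "'a set \<Rightarrow> ('a \<Rightarrow> 'a \<Rightarrow> ennreal) \<Rightarrow> (real \<Rightarrow> 'a) \<Rightarrow> real \<Rightarrow> 'a \<Rightarrow> 'a \<Rightarrow> bool" where
  "is_path X d p n x y \<longleftrightarrow> 0 \<le> n \<and> p ` {0..n} \<subseteq> X \<and> p 0 = x \<and> p n = y \<and>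
     (\<forall>a b. 0 \<le> a \<longrightarrow> a \<le> b \<longrightarrow> b \<le> n \<longrightarrow> d (p a) (p b) \<le> ennreal (b - a))"

definition geodesic_semimetric :: "'a set \<Rightarrow> ('a \<Rightarrow> 'a \<Rightarrow> ennreal) \<Rightarrow> bool" where
  "geodesic_semimetric X d \<longleftrightarrow>
     (\<forall>x\<in>X. \<forall>y\<in>X. d x y \<noteq> \<infinity> \<longrightarrow> (\<exists>p. is_path X d p (enn2real (d x y)) x y))"

definition out_ball :: "'a set \<Rightarrow> ('a \<Rightarrow> 'a \<Rightarrow> ennreal) \<Rightarrow> real \<Rightarrow> 'a \<Rightarrow> 'a set" where
  "out_ball X d r x0 = {y\<in>X. d x0 y \<le> ennreal r}"

definition in_ball :: "'a set \<Rightarrow> ('a \<Rightarrow> 'a \<Rightarrow> ennreal) \<Rightarrow> real \<Rightarrow> 'a \<Rightarrow> 'a set" where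
  "in_ball X d r x0 = {y\<in>X. d y x0 \<le> ennreal r}"

definition strong_ball :: "'a set \<Rightarrow> ('a \<Rightarrow> 'a \<Rightarrow> ennreal) \<Rightarrow> real \<Rightarrow> 'a \<Rightarrow> 'a set" where
  "strong_ball X d r x0 = out_ball X d r x0 \<inter> in_ball X d r x0"

definition isometric_action :: "('g, 'm) monoid_scheme \<Rightarrow> 'a set \<Rightarrow> ('a \<Rightarrow> 'a \<Rightarrow> ennreal) \<Rightarrow> ('g \<Rightarrow> 'a \<Rightarrow> 'a) \<Rightarrow> bool" where
  "isometric_action G X d \<phi> \<longleftrightarrow> group_action G X \<phi> \<and>
     (\<forall>g\<in>carrier G. \<forall>x\<in>X. \<forall>y\<in>X. d (\<phi> g x) (\<phi> g y) = d x y)"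

definition cocompact_action :: "('g, 'm) monoid_scheme \<Rightarrow> 'a set \<Rightarrow> ('a \<Rightarrow> 'a \<Rightarrow> ennreal) \<Rightarrow> ('g \<Rightarrow> 'a \<Rightarrow> 'a) \<Rightarrow> bool" where
  "cocompact_action G X d \<phi> \<longleftrightarrow>
     (\<exists>x0\<in>X. \<exists>r\<ge>0. X = (\<Union>g\<in>carrier G. \<phi> g ` strong_ball X d r x0))"

definition outward_proper :: "('g, 'm) monoid_scheme \<Rightarrow> 'a set \<Rightarrow> ('a \<Rightarrow> 'a \<Rightarrow> ennreal) \<Rightarrow> ('g \<Rightarrow> 'a \<Rightarrow> 'a) \<Rightarrow> bool" where
  "outward_proper G X d \<phi> \<longleftrightarrow>
     (\<forall>x0\<in>X. \<forall>r\<ge>0. finite {g\<in>carrier G. out_ball X d r x0 \<inter> \<phi> g ` out_ball X d r x0 \<noteq> {}})"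

definition inward_proper :: "('g, 'm) monoid_scheme \<Rightarrow> 'a set \<Rightarrow> ('a \<Rightarrow> 'a \<Rightarrow> ennreal) \<Rightarrow> ('g \<Rightarrow> 'a \<Rightarrow> 'a) \<Rightarrow> bool" where
  "inward_proper G X d \<phi> \<longleftrightarrow>
     (\<forall>x0\<in>X. \<forall>r\<ge>0. finite {g\<in>carrier G. in_ball X d r x0 \<inter> \<phi> g ` in_ball X d r x0 \<noteq> {}})"

definition quasi_dense :: "'a set \<Rightarrow> ('a \<Rightarrow> 'a \<Rightarrow> ennreal) \<Rightarrow> real \<Rightarrow> 'a set \<Rightarrow> bool" where
  "quasi_dense X d mu T \<longleftrightarrow>
     (\<forall>x\<in>X. \<exists>y\<in>T. max (d x y) (d y x) \<le> ennreal mu)"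

text \<open>(lambda, epsilon)-quasi-isometric embedding; the lower bound
  (1/lambda) d - eps <= d' is written equivalently as (1/lambda) d <= d' + eps,
  which avoids truncated subtraction in ennreal.\<close>
definition qi_embedding :: "'a set \<Rightarrow> ('a \<Rightarrow> 'a \<Rightarrow> ennreal) \<Rightarrow> 'b set \<Rightarrow> ('b \<Rightarrow> 'b \<Rightarrow> ennreal)
    \<Rightarrow> ('a \<Rightarrow> 'b) \<Rightarrow> real \<Rightarrow> real \<Rightarrow> bool" where
  "qi_embedding X d X' d' f lam eps \<longleftrightarrow> 1 \<le> lam \<and> 0 < eps \<and> f ` X \<subseteq> X' \<and>
     (\<forall>x\<in>X. \<forall>y\<in>X. ennreal (1 / lam) * d x y \<le> d' (f x) (f y) + ennreal eps \<and>
                     d' (f x) (f y) \<le> ennreal lam * d x y + ennreal eps)"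

definition quasi_isometry :: "'a set \<Rightarrow> ('a \<Rightarrow> 'a \<Rightarrow> ennreal) \<Rightarrow> 'b set \<Rightarrow> ('b \<Rightarrow> 'b \<Rightarrow> ennreal)
    \<Rightarrow> ('a \<Rightarrow> 'b) \<Rightarrow> bool" where
  "quasi_isometry X d X' d' f \<longleftrightarrow>
     (\<exists>lam eps mu. qi_embedding X d X' d' f lam eps \<and> 0 \<le> mu \<and> quasi_dense X' d' mu (f ` X))"

definition quasi_isometric :: "'a set \<Rightarrow> ('a \<Rightarrow> 'a \<Rightarrow> ennreal) \<Rightarrow> 'b set \<Rightarrow> ('b \<Rightarrow> 'b \<Rightarrow> ennreal) \<Rightarrow> bool" where
  "quasi_isometric X d X' d' \<longleftrightarrow> (\<exists>f. quasi_isometry X d X' d' f)"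

definition quasi_metric :: "'a set \<Rightarrow> ('a \<Rightarrow> 'a \<Rightarrow> ennreal) \<Rightarrow> bool" where
  "quasi_metric X d \<longleftrightarrow> semimetric X d \<and> strongly_connected X d \<and>
     (\<exists>lam eps. 1 \<le> lam \<and> 0 \<le> eps \<and>
        (\<forall>x\<in>X. \<forall>y\<in>X. d y x \<le> ennreal lam * d x y + ennreal eps))"

definition word_prod :: "('g, 'm) monoid_scheme \<Rightarrow> 'g list \<Rightarrow> 'g" where
  "word_prod G ss = foldr (\<lambda>s acc. s \<otimes>\<^bsub>G\<^esub> acc) ss \<one>\<^bsub>G\<^esub>"

definition generates_monoid :: "('g, 'm) monoid_scheme \<Rightarrow> 'g set \<Rightarrow> bool" where
  "generates_monoid G S \<longleftrightarrow> S \<subseteq> carrier G \<and>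
     (\<forall>g\<in>carrier G. \<exists>ss. set ss \<subseteq> S \<and> g = word_prod G ss)"

definition word_metric :: "('g, 'm) monoid_scheme \<Rightarrow> 'g set \<Rightarrow> 'g \<Rightarrow> 'g \<Rightarrow> ennreal" where
  "word_metric G S g h =
     (if \<exists>ss. set ss \<subseteq> S \<and> h = g \<otimes>\<^bsub>G\<^esub> word_prod G ss
      then of_nat (LEAST n. \<exists>ss. length ss = n \<and> set ss \<subseteq> S \<and> h = g \<otimes>\<^bsub>G\<^esub> word_prod G ss)
      else \<infinity>)"

end

theory Submission
  imports Defs
begin

lemma inf_ennreal_top: "(\<infinity>::ennreal) = Orderings.top"
  by (simp add: infinity_ennreal_def)

lemma enn_fin_le: "(a::ennreal) \<le> ennreal r \<Longrightarrow> a \<noteq> \<infinity>"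
  using neq_top_trans[of "ennreal r" a] by (simp add: inf_ennreal_top)

lemma enn_fin_sum: "(x::ennreal) \<le> a + b \<Longrightarrow> a \<noteq> \<infinity> \<Longrightarrow> b \<noteq> \<infinity> \<Longrightarrow> x \<noteq> \<infinity>"
  unfolding inf_ennreal_top by (metis ennreal_add_eq_top neq_top_trans)

lemma word_prod_Nil[simp]: "word_prod G [] = \<one>\<^bsub>G\<^esub>"
  by (simp add: word_prod_def)

lemma word_prod_Cons[simp]: "word_prod G (s # ss) = s \<otimes>\<^bsub>G\<^esub> word_prod G ss"
  by (simp add: word_prod_def)

lemma (in group) word_prod_closed: "set ss \<subseteq> carrier G \<Longrightarrow> word_prod G ss \<in> carrier G"
  by (induction ss) auto

lemma (in group) word_prod_append:
  "set xs \<subseteq> carrier G \<Longrightarrow> set ys \<subseteq> carrier G \<Longrightarrow>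
   word_prod G (xs @ ys) = word_prod G xs \<otimes> word_prod G ys"
  by (induction xs) (auto simp: m_assoc word_prod_closed)

lemma (in group) word_prod_concat:
  assumes "set ts \<subseteq> carrier G" "S \<subseteq> carrier G"
    and "\<forall>t\<in>set ts. set (ws t) \<subseteq> S \<and> t = word_prod G (ws t) \<and> length (ws t) \<le> M"
  shows "word_prod G (concat (map ws ts)) = word_prod G ts \<and> set (concat (map ws ts)) \<subseteq> S
     \<and> length (concat (map ws ts)) \<le> length ts * M"
  using assms
proof (induction ts)
  case Nil then show ?case by simp
next
  case (Cons t ts)
  then have h: "word_prod G (concat (map ws ts)) = word_prod G ts \<and> set (concat (map ws ts)) \<subseteq> S
     \<and> length (concat (map ws ts)) \<le> length ts * M" by auto
  have s1: "set (ws t) \<subseteq> carrier G" using Cons.prems by auto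
  have s2: "set (concat (map ws ts)) \<subseteq> carrier G" using Cons.prems h by auto
  have e: "word_prod G (ws t @ concat (map ws ts)) = word_prod G (ws t) \<otimes> word_prod G (concat (map ws ts))"
    by (rule word_prod_append[OF s1 s2])
  show ?case using Cons.prems h e by auto
qed

lemma word_metric_le:
  assumes "set ss \<subseteq> S" "h = g \<otimes>\<^bsub>G\<^esub> word_prod G ss"
  shows "word_metric G S g h \<le> of_nat (length ss)"
proof -
  have ex: "\<exists>ss. set ss \<subseteq> S \<and> h = g \<otimes>\<^bsub>G\<^esub> word_prod G ss" using assms by blast
  have "(LEAST n. \<exists>ss. length ss = n \<and> set ss \<subseteq> S \<and> h = g \<otimes>\<^bsub>G\<^esub> word_prod G ss) \<le> length ss"
    by (rule Least_le) (use assms in blast)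
  then show ?thesis using ex by (simp add: word_metric_def)
qed

lemma (in group) word_metric_witness:
  assumes "generates_monoid G S" "g \<in> carrier G" "h \<in> carrier G"
  shows "\<exists>ss. set ss \<subseteq> S \<and> h = g \<otimes> word_prod G ss \<and> word_metric G S g h = of_nat (length ss)"
proof -
  obtain ss0 where ss0: "set ss0 \<subseteq> S" "inv g \<otimes> h = word_prod G ss0"
    using assms unfolding generates_monoid_def by (metis inv_closed m_closed)
  have "h = g \<otimes> (inv g \<otimes> h)" using assms by (simp add: m_assoc[symmetric])
  then have ex: "\<exists>ss. set ss \<subseteq> S \<and> h = g \<otimes> word_prod G ss" using ss0 by metis
  let ?P = "\<lambda>n. \<exists>ss. length ss = n \<and> set ss \<subseteq> S \<and> h = g \<otimes> word_prod G ss"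
  have "?P (LEAST n. ?P n)" by (rule LeastI_ex) (use ex in blast)
  then obtain ss where "length ss = (LEAST n. ?P n)" "set ss \<subseteq> S" "h = g \<otimes> word_prod G ss" by blast
  then show ?thesis using ex by (auto simp: word_metric_def)
qed


locale SM = group_action G X \<phi> for G (structure) and X and \<phi> +
  fixes d :: "'a \<Rightarrow> 'a \<Rightarrow> ennreal" and c and r :: real
  assumes iso: "\<forall>g\<in>carrier G. \<forall>x\<in>X. \<forall>y\<in>X. d (\<phi> g x) (\<phi> g y) = d x y"
    and sm: "semimetric X d" and geo: "geodesic_semimetric X d"
    and bp: "has_basepoint X d" and cX: "c \<in> X" and r0: "r \<ge> 0"
    and cover: "X = (\<Union>g\<in>carrier G. \<phi> g ` strong_ball X d r c)"
begin

sublocale grp: group G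
  using group_hom group_hom.axioms(1) by auto

lemma phiX: "g \<in> carrier G \<Longrightarrow> x \<in> X \<Longrightarrow> \<phi> g x \<in> X"
  using element_image by blast

lemma phi_one: "x \<in> X \<Longrightarrow> \<phi> \<one> x = x"
proof -
  assume x: "x \<in> X"
  have "\<phi> \<one> x = (\<lambda>x\<in>X. x) x" by (simp only: id_eq_one)
  then show ?thesis using x by simp
qed

lemma phi_inv: "g \<in> carrier G \<Longrightarrow> y \<in> X \<Longrightarrow> \<phi> g (\<phi> (inv g) y) = y"
proof -
  assume g: "g \<in> carrier G" and y: "y \<in> X"
  have "\<phi> (g \<otimes> inv g) y = \<phi> g (\<phi> (inv g) y)"
    by (rule composition_rule[OF y g grp.inv_closed[OF g]])
  then show ?thesis using g y phi_one by simp
qed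

lemma near: "x \<in> X \<Longrightarrow> \<exists>g\<in>carrier G. d x (\<phi> g c) \<le> ennreal r \<and> d (\<phi> g c) x \<le> ennreal r"
proof -
  assume x: "x \<in> X"
  have "x \<in> (\<Union>g\<in>carrier G. \<phi> g ` strong_ball X d r c)"
    by (rule iffD1[OF arg_cong[OF cover, of "\<lambda>A. x \<in> A"] x])
  then obtain g z where g: "g \<in> carrier G" and z: "z \<in> strong_ball X d r c" and xz: "x = \<phi> g z"
    by blast
  have zX: "z \<in> X" and "d c z \<le> ennreal r" "d z c \<le> ennreal r"
    using z by (auto simp: strong_ball_def out_ball_def in_ball_def)
  moreover have "d x (\<phi> g c) = d z c" "d (\<phi> g c) x = d c z"
    using iso g zX cX xz by auto
  ultimately show ?thesis using g by (intro bexI[of _ g]) simp_all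
qed

lemma isoI: "g \<in> carrier G \<Longrightarrow> x \<in> X \<Longrightarrow> y \<in> X \<Longrightarrow> d (\<phi> g x) (\<phi> g y) = d x y"
  using iso by blast

lemma tri: "x \<in> X \<Longrightarrow> y \<in> X \<Longrightarrow> z \<in> X \<Longrightarrow> d x z \<le> d x y + d y z"
  using conjunct2[OF sm[unfolded semimetric_def]] by blast

lemma finite_d: assumes "x \<in> X" "y \<in> X" shows "d x y \<noteq> \<infinity>"
proof -
  obtain p where p: "is_basepoint X d p" using bp unfolding has_basepoint_def by (elim exE)
  then have pX: "p \<in> X" and pf: "\<And>y. y \<in> X \<Longrightarrow> d p y \<noteq> \<infinity>"
    unfolding is_basepoint_def by simp_all
  obtain h where h: "h \<in> carrier G" "d (\<phi> h c) p \<le> ennreal r" using near[OF pX] by blast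
  have hcX: "\<phi> h c \<in> X" by (rule phiX[OF h(1) cX])
  have f1: "d (\<phi> h c) y \<noteq> \<infinity>" if "y \<in> X" for y
  proof -
    have "d (\<phi> h c) y \<le> d (\<phi> h c) p + d p y" by (rule tri[OF hcX pX that])
    then show ?thesis by (rule enn_fin_sum[OF _ enn_fin_le[OF h(2)] pf[OF that]])
  qed
  have f2: "d c y \<noteq> \<infinity>" if "y \<in> X" for y
  proof -
    have "d (\<phi> h c) (\<phi> h y) = d c y" by (rule isoI[OF h(1) cX that])
    then show ?thesis using f1[OF phiX[OF h(1) that]] by simp
  qed
  have f3: "d (\<phi> g c) y \<noteq> \<infinity>" if "y \<in> X" "g \<in> carrier G" for y g
  proof -
    have e: "\<phi> g (\<phi> (inv g) y) = y" by (rule phi_inv[OF that(2) that(1)])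
    have iX: "\<phi> (inv g) y \<in> X" by (rule phiX[OF grp.inv_closed[OF that(2)] that(1)])
    have "d (\<phi> g c) (\<phi> g (\<phi> (inv g) y)) = d c (\<phi> (inv g) y)"
      by (rule isoI[OF that(2) cX iX])
    then show ?thesis using f2[OF iX] e by simp
  qed
  obtain g where g: "g \<in> carrier G" "d x (\<phi> g c) \<le> ennreal r" using near[OF assms(1)] by blast
  have "d x y \<le> d x (\<phi> g c) + d (\<phi> g c) y" by (rule tri[OF assms(1) phiX[OF g(1) cX] assms(2)])
  then show ?thesis by (rule enn_fin_sum[OF _ enn_fin_le[OF g(2)] f3[OF assms(2) g(1)]])
qed

definition D :: "'a \<Rightarrow> 'a \<Rightarrow> real" where "D x y = enn2real (d x y)"

lemma d_eq: "x \<in> X \<Longrightarrow> y \<in> X \<Longrightarrow> d x y = ennreal (D x y)"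
proof -
  assume x: "x \<in> X" and y: "y \<in> X"
  have "d x y \<noteq> Orderings.top" using finite_d[OF x y] unfolding inf_ennreal_top .
  then show ?thesis unfolding D_def ennreal_enn2real_if by simp
qed

lemma D_nonneg: "0 \<le> D x y" by (simp add: D_def)

lemma D_tri: assumes "x \<in> X" "y \<in> X" "z \<in> X" shows "D x z \<le> D x y + D y z"
proof -
  have "ennreal (D x z) \<le> ennreal (D x y) + ennreal (D y z)"
    using tri[OF assms] d_eq assms by simp
  then have le: "ennreal (D x z) \<le> ennreal (D x y + D y z)" using D_nonneg by (simp add: ennreal_plus)
  have nn: "0 \<le> D x y + D y z" by (simp add: D_nonneg add_nonneg_nonneg)
  show ?thesis using ennreal_le_iff[OF nn] le by blast
qed

lemma D_iso: "g \<in> carrier G \<Longrightarrow> x \<in> X \<Longrightarrow> y \<in> X \<Longrightarrow> D (\<phi> g x) (\<phi> g y) = D x y"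
  using iso by (simp add: D_def)

lemma D_self: "x \<in> X \<Longrightarrow> D x x = 0"
proof -
  assume x: "x \<in> X"
  have "d x x = 0 \<longleftrightarrow> x = x" by (rule bspec[OF bspec[OF conjunct1[OF sm[unfolded semimetric_def]] x] x])
  then have "d x x = 0" by simp
  then show ?thesis by (simp add: D_def)
qed

lemma near_D: "x \<in> X \<Longrightarrow> \<exists>g\<in>carrier G. D x (\<phi> g c) \<le> r \<and> D (\<phi> g c) x \<le> r"
proof -
  assume x: "x \<in> X"
  then obtain g where g: "g \<in> carrier G" "d x (\<phi> g c) \<le> ennreal r" "d (\<phi> g c) x \<le> ennreal r"
    using near by blast
  have gX: "\<phi> g c \<in> X" by (rule phiX[OF g(1) cX])
  show ?thesis using g d_eq[OF x gX] d_eq[OF gX x] r0 by auto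
qed

lemma phic: "g \<in> carrier G \<Longrightarrow> \<phi> g c \<in> X" by (rule phiX[OF _ cX])

lemma key: assumes "a \<in> carrier G" "b \<in> carrier G"
  shows "D (\<phi> a c) (\<phi> b c) = D c (\<phi> (inv a \<otimes> b) c)"
proof -
  have ib: "inv a \<otimes> b \<in> carrier G" using assms by simp
  have "a \<otimes> (inv a \<otimes> b) = b" using assms by (simp add: grp.m_assoc[symmetric])
  then have "\<phi> b c = \<phi> a (\<phi> (inv a \<otimes> b) c)"
    using composition_rule[OF cX assms(1) ib] by simp
  then show ?thesis using D_iso[OF assms(1) cX phic[OF ib]] by simp
qed

lemma geo_step: assumes "x \<in> X" "y \<in> X" "D x y > 1"
  shows "\<exists>z\<in>X. D x z \<le> 1 \<and> D z y \<le> D x y - 1"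
proof -
  obtain p where p: "is_path X d p (enn2real (d x y)) x y"
    using geo finite_d[OF assms(1,2)] assms(1,2) unfolding geodesic_semimetric_def by blast
  let ?L = "D x y"
  have p': "0 \<le> ?L" "p ` {0..?L} \<subseteq> X" "p 0 = x" "p ?L = y"
     "\<And>a b. 0 \<le> a \<Longrightarrow> a \<le> b \<Longrightarrow> b \<le> ?L \<Longrightarrow> d (p a) (p b) \<le> ennreal (b - a)"
    using p unfolding is_path_def D_def by auto
  have zX: "p 1 \<in> X" using p'(2) assms(3) by auto
  have "d x (p 1) \<le> ennreal 1" using p'(5)[of 0 1] p'(3) assms(3) by simp
  then have 1: "D x (p 1) \<le> 1" using d_eq[OF assms(1) zX] by simp
  have "d (p 1) y \<le> ennreal (?L - 1)" using p'(5)[of 1 ?L] p'(4) assms(3) by simp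
  then have 2: "D (p 1) y \<le> ?L - 1" using d_eq[OF zX assms(2)] assms(3) by simp
  show ?thesis using zX 1 2 by blast
qed

definition S0 where "S0 = {s \<in> carrier G. D c (\<phi> s c) \<le> 2 * r + 1}"

lemma S0_carrier: "S0 \<subseteq> carrier G" by (auto simp: S0_def)

lemma S0_mem: assumes "a \<in> carrier G" "b \<in> carrier G" "D (\<phi> a c) (\<phi> b c) \<le> 2 * r + 1"
  shows "inv a \<otimes> b \<in> S0"
  using assms key[OF assms(1,2)] by (simp add: S0_def)

lemma Qbase: assumes "a \<in> carrier G" "g \<in> carrier G" "y \<in> X" "D (\<phi> a c) y \<le> r" "D y (\<phi> g c) \<le> 1"
  shows "\<exists>ss. set ss \<subseteq> S0 \<and> length ss \<le> 1 \<and> inv a \<otimes> g = word_prod G ss"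
proof -
  have "D (\<phi> a c) (\<phi> g c) \<le> D (\<phi> a c) y + D y (\<phi> g c)"
    by (rule D_tri[OF phic[OF assms(1)] assms(3) phic[OF assms(2)]])
  then have "inv a \<otimes> g \<in> S0" using assms r0 by (intro S0_mem) auto
  then show ?thesis using assms
    by (intro exI[of _ "[inv a \<otimes> g]"]) simp
qed

lemma cancel_mid: "a \<in> carrier G \<Longrightarrow> b \<in> carrier G \<Longrightarrow> g \<in> carrier G \<Longrightarrow>
   (inv a \<otimes> b) \<otimes> (inv b \<otimes> g) = inv a \<otimes> g"
  by (simp add: grp.m_assoc grp.m_assoc[symmetric, of b "inv b" g])

lemma Q: "\<forall>a g y. a \<in> carrier G \<longrightarrow> g \<in> carrier G \<longrightarrow> y \<in> X \<longrightarrow> D (\<phi> a c) y \<le> r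
   \<longrightarrow> D y (\<phi> g c) \<le> real n \<longrightarrow> (\<exists>ss. set ss \<subseteq> S0 \<and> length ss \<le> n + 1 \<and> inv a \<otimes> g = word_prod G ss)"
proof (induction n)
  case 0
  then show ?case using Qbase by fastforce
next
  case (Suc n)
  show ?case
  proof (intro allI impI)
    fix a g y assume a: "a \<in> carrier G" and g: "g \<in> carrier G" and y: "y \<in> X"
      and ay: "D (\<phi> a c) y \<le> r" and yg: "D y (\<phi> g c) \<le> real (Suc n)"
    show "\<exists>ss. set ss \<subseteq> S0 \<and> length ss \<le> Suc n + 1 \<and> inv a \<otimes> g = word_prod G ss"
    proof (cases "D y (\<phi> g c) \<le> 1")
      case True
      then show ?thesis using Qbase[OF a g y ay] by fastforce
    next
      case False
      then obtain z where z: "z \<in> X" "D y z \<le> 1" "D z (\<phi> g c) \<le> D y (\<phi> g c) - 1"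
        using geo_step[OF y phic[OF g]] by auto
      obtain b where b: "b \<in> carrier G" "D z (\<phi> b c) \<le> r" "D (\<phi> b c) z \<le> r"
        using near_D[OF z(1)] by blast
      have "D (\<phi> a c) (\<phi> b c) \<le> D (\<phi> a c) y + D y (\<phi> b c)"
        by (rule D_tri[OF phic[OF a] y phic[OF b(1)]])
      moreover have "D y (\<phi> b c) \<le> D y z + D z (\<phi> b c)"
        by (rule D_tri[OF y z(1) phic[OF b(1)]])
      ultimately have "D (\<phi> a c) (\<phi> b c) \<le> 2 * r + 1" using ay z b by linarith
      then have s: "inv a \<otimes> b \<in> S0" using S0_mem a b by blast
      have "D z (\<phi> g c) \<le> real n" using z yg by simp
      then obtain ss where ss: "set ss \<subseteq> S0" "length ss \<le> n + 1" "inv b \<otimes> g = word_prod G ss"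
        using Suc.IH b g z by blast
      have "inv a \<otimes> g = word_prod G ((inv a \<otimes> b) # ss)"
        using cancel_mid[OF a b(1) g] ss(3) by simp
      then show ?thesis using s ss by (intro exI[of _ "(inv a \<otimes> b) # ss"]) auto
    qed
  qed
qed

lemma W: assumes k: "k \<in> carrier G"
  shows "\<exists>ss. set ss \<subseteq> S0 \<and> real (length ss) \<le> D c (\<phi> k c) + 2 \<and> k = word_prod G ss"
proof -
  define n where "n = nat \<lceil>D c (\<phi> k c)\<rceil>"
  have n1: "D c (\<phi> k c) \<le> real n" unfolding n_def by linarith
  have n2: "real n \<le> D c (\<phi> k c) + 1" unfolding n_def using D_nonneg[of c "\<phi> k c"] by linarith
  have "D (\<phi> \<one> c) c \<le> r" using phi_one cX D_self r0 by simp
  then obtain ss where "set ss \<subseteq> S0" "length ss \<le> n + 1" "inv \<one> \<otimes> k = word_prod G ss"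
    using Q[of n] k cX n1 by (metis grp.one_closed)
  then show ?thesis using n2 k by (intro exI[of _ ss]) auto
qed

lemma word_bound:
  assumes "g \<in> carrier G" "set ss \<subseteq> carrier G" "\<forall>s\<in>set ss. D c (\<phi> s c) \<le> K"
  shows "D (\<phi> g c) (\<phi> (g \<otimes> word_prod G ss) c) \<le> real (length ss) * K"
  using assms
proof (induction ss arbitrary: g)
  case Nil then show ?case using D_self[OF phic[OF Nil.prems(1)]] Nil.prems(1) by simp
next
  case (Cons s ss)
  have s: "s \<in> carrier G" and ssc: "set ss \<subseteq> carrier G" using Cons.prems by auto
  have w: "word_prod G ss \<in> carrier G" using grp.word_prod_closed ssc by blast
  have gs: "g \<otimes> s \<in> carrier G" using Cons.prems s by simp
  have e: "g \<otimes> word_prod G (s # ss) = (g \<otimes> s) \<otimes> word_prod G ss"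
    using Cons.prems s w by (simp add: grp.m_assoc)
  have "D (\<phi> g c) (\<phi> (g \<otimes> s) c) = D c (\<phi> s c)"
    using composition_rule[OF cX Cons.prems(1) s] D_iso[OF Cons.prems(1) cX phic[OF s]] by simp
  moreover have "D (\<phi> (g \<otimes> s) c) (\<phi> ((g \<otimes> s) \<otimes> word_prod G ss) c) \<le> real (length ss) * K"
    using Cons.IH[OF gs ssc] Cons.prems by auto
  moreover have "D (\<phi> g c) (\<phi> ((g \<otimes> s) \<otimes> word_prod G ss) c) \<le>
      D (\<phi> g c) (\<phi> (g \<otimes> s) c) + D (\<phi> (g \<otimes> s) c) (\<phi> ((g \<otimes> s) \<otimes> word_prod G ss) c)"
    by (rule D_tri[OF phic[OF Cons.prems(1)] phic[OF gs] phic[OF grp.m_closed[OF gs w]]])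
  ultimately show ?case using e Cons.prems by (simp add: algebra_simps)
qed

lemma word_bound_rev:
  assumes "g \<in> carrier G" "set ss \<subseteq> carrier G" "\<forall>s\<in>set ss. D (\<phi> s c) c \<le> K"
  shows "D (\<phi> (g \<otimes> word_prod G ss) c) (\<phi> g c) \<le> real (length ss) * K"
  using assms
proof (induction ss arbitrary: g)
  case Nil then show ?case using D_self[OF phic[OF Nil.prems(1)]] Nil.prems(1) by simp
next
  case (Cons s ss)
  have s: "s \<in> carrier G" and ssc: "set ss \<subseteq> carrier G" using Cons.prems by auto
  have w: "word_prod G ss \<in> carrier G" using grp.word_prod_closed ssc by blast
  have gs: "g \<otimes> s \<in> carrier G" using Cons.prems s by simp
  have e: "g \<otimes> word_prod G (s # ss) = (g \<otimes> s) \<otimes> word_prod G ss"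
    using Cons.prems s w by (simp add: grp.m_assoc)
  have "D (\<phi> (g \<otimes> s) c) (\<phi> g c) = D (\<phi> s c) c"
    using composition_rule[OF cX Cons.prems(1) s] D_iso[OF Cons.prems(1) phic[OF s] cX] by simp
  moreover have "D (\<phi> ((g \<otimes> s) \<otimes> word_prod G ss) c) (\<phi> (g \<otimes> s) c) \<le> real (length ss) * K"
    using Cons.IH[OF gs ssc] Cons.prems by auto
  moreover have "D (\<phi> ((g \<otimes> s) \<otimes> word_prod G ss) c) (\<phi> g c) \<le>
      D (\<phi> ((g \<otimes> s) \<otimes> word_prod G ss) c) (\<phi> (g \<otimes> s) c) + D (\<phi> (g \<otimes> s) c) (\<phi> g c)"
    by (rule D_tri[OF phic[OF grp.m_closed[OF gs w]] phic[OF gs] phic[OF Cons.prems(1)]])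
  ultimately show ?case using e Cons.prems by (simp add: algebra_simps)
qed

lemma S0_finite:
  assumes "outward_proper G X d \<phi> \<or> inward_proper G X d \<phi>"
  shows "finite S0"
proof -
  define R where "R = 2 * r + 1"
  have R0: "R \<ge> 0" using r0 by (simp add: R_def)
  have cc: "d c c = 0" using sm cX by (simp add: semimetric_def)
  show ?thesis using assms
  proof
    assume op: "outward_proper G X d \<phi>"
    have "S0 \<subseteq> {g\<in>carrier G. out_ball X d R c \<inter> \<phi> g ` out_ball X d R c \<noteq> {}}"
    proof
      fix s assume s: "s \<in> S0"
      then have sc: "s \<in> carrier G" and Ds: "D c (\<phi> s c) \<le> R" by (auto simp: S0_def R_def)
      have "\<phi> s c \<in> out_ball X d R c" using Ds d_eq[OF cX phic[OF sc]] phic[OF sc] R0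
        by (simp add: out_ball_def)
      moreover have "\<phi> s c \<in> \<phi> s ` out_ball X d R c" using cX cc by (simp add: out_ball_def)
      ultimately show "s \<in> {g\<in>carrier G. out_ball X d R c \<inter> \<phi> g ` out_ball X d R c \<noteq> {}}"
        using sc by blast
    qed
    moreover have "finite {g\<in>carrier G. out_ball X d R c \<inter> \<phi> g ` out_ball X d R c \<noteq> {}}"
      using op cX R0 unfolding outward_proper_def by blast
    ultimately show ?thesis by (rule finite_subset)
  next
    assume ip: "inward_proper G X d \<phi>"
    have "S0 \<subseteq> {g\<in>carrier G. in_ball X d R c \<inter> \<phi> g ` in_ball X d R c \<noteq> {}}"
    proof
      fix s assume s: "s \<in> S0"
      then have sc: "s \<in> carrier G" and Ds: "D c (\<phi> s c) \<le> R" by (auto simp: S0_def R_def)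
      have isc: "inv s \<in> carrier G" using sc by simp
      have iX: "\<phi> (inv s) c \<in> X" using phic[OF isc] .
      have e: "\<phi> s (\<phi> (inv s) c) = c" using phi_inv sc cX by blast
      have "D (\<phi> (inv s) c) c = D c (\<phi> s c)"
        using D_iso[OF sc iX cX] e by simp
      then have "\<phi> (inv s) c \<in> in_ball X d R c" using Ds d_eq[OF iX cX] iX R0
        by (simp add: in_ball_def)
      then have "c \<in> \<phi> s ` in_ball X d R c" using e by (metis imageI)
      moreover have "c \<in> in_ball X d R c" using cX cc by (simp add: in_ball_def)
      ultimately show "s \<in> {g\<in>carrier G. in_ball X d R c \<inter> \<phi> g ` in_ball X d R c \<noteq> {}}"
        using sc by blast
    qed
    moreover have "finite {g\<in>carrier G. in_ball X d R c \<inter> \<phi> g ` in_ball X d R c \<noteq> {}}"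
      using ip cX R0 unfolding inward_proper_def by blast
    ultimately show ?thesis by (rule finite_subset)
  qed
qed

lemma S0_gen: "generates_monoid G S0"
  unfolding generates_monoid_def using S0_carrier W by blast

lemma qi_part:
  assumes fS: "finite S" and gS: "generates_monoid G S" and fS0: "finite S0"
  shows "quasi_isometric (carrier G) (word_metric G S) X d"
proof -
  have Sc: "S \<subseteq> carrier G" using gS by (simp add: generates_monoid_def)
  define K where "K = (\<Sum>s\<in>S. D c (\<phi> s c))"
  have K0: "0 \<le> K" unfolding K_def by (simp add: D_nonneg sum_nonneg)
  have Kb: "D c (\<phi> s c) \<le> K" if "s \<in> S" for s
    unfolding K_def using that fS by (intro member_le_sum) (auto simp: D_nonneg)
  have "\<forall>s\<in>S0. \<exists>ws. set ws \<subseteq> S \<and> s = word_prod G ws"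
    using gS S0_carrier unfolding generates_monoid_def by blast
  then obtain ws where ws: "\<And>s. s \<in> S0 \<Longrightarrow> set (ws s) \<subseteq> S \<and> s = word_prod G (ws s)"
    by metis
  define M where "M = (\<Sum>s\<in>S0. length (ws s))"
  have Mb: "length (ws s) \<le> M" if "s \<in> S0" for s
    unfolding M_def using that fS0 by (intro member_le_sum) auto
  define lam where "lam = 1 + K + real M"
  have lam1: "1 \<le> lam" using K0 by (simp add: lam_def)
  have Kl: "K \<le> lam" and Ml: "real M \<le> lam" by (auto simp: lam_def K0)
  define f where "f = (\<lambda>g. \<phi> g c)"
  have lower: "ennreal (1 / lam) * word_metric G S g h \<le> d (f g) (f h) + ennreal 2"
    if g: "g \<in> carrier G" and h: "h \<in> carrier G" for g h
  proof -
    define k where "k = inv g \<otimes> h"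
    have k: "k \<in> carrier G" using g h by (simp add: k_def)
    obtain ts where ts: "set ts \<subseteq> S0" "real (length ts) \<le> D c (\<phi> k c) + 2" "k = word_prod G ts"
      using W[OF k] by blast
    have Dk: "D c (\<phi> k c) = D (\<phi> g c) (\<phi> h c)" using key[OF g h] by (simp add: k_def)
    have tsc: "set ts \<subseteq> carrier G" using ts(1) S0_carrier by blast
    have conc: "word_prod G (concat (map ws ts)) = word_prod G ts \<and> set (concat (map ws ts)) \<subseteq> S
       \<and> length (concat (map ws ts)) \<le> length ts * M"
      using ts(1) ws Mb by (intro grp.word_prod_concat[OF tsc Sc]) auto
    define us where "us = concat (map ws ts)"
    have "h = g \<otimes> (inv g \<otimes> h)" using g h by (simp add: grp.m_assoc[symmetric])
    then have "h = g \<otimes> word_prod G us" using conc ts(3) by (simp add: us_def k_def)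
    then have wm: "word_metric G S g h \<le> of_nat (length us)"
      using conc by (intro word_metric_le) (auto simp: us_def)
    have "real (length us) \<le> real (length ts) * real M"
      using conc unfolding us_def by (metis of_nat_le_iff of_nat_mult)
    also have "\<dots> \<le> (D c (\<phi> k c) + 2) * real M" using ts(2) by (intro mult_right_mono) auto
    also have "\<dots> \<le> (D c (\<phi> k c) + 2) * lam" using Ml D_nonneg[of c "\<phi> k c"]
      by (intro mult_left_mono) auto
    finally have nb: "1 / lam * real (length us) \<le> D (\<phi> g c) (\<phi> h c) + 2"
      using lam1 Dk by (simp add: field_simps)
    have "ennreal (1 / lam) * word_metric G S g h \<le> ennreal (1 / lam) * of_nat (length us)"
      using wm by (intro mult_left_mono) auto
    also have "\<dots> = ennreal (1 / lam * real (length us))"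
      unfolding ennreal_of_nat_eq_real_of_nat by (rule ennreal_mult[symmetric]) (use lam1 in auto)
    also have "\<dots> \<le> ennreal (D (\<phi> g c) (\<phi> h c) + 2)" using nb by (rule ennreal_leI)
    also have "\<dots> = d (f g) (f h) + ennreal 2"
      using d_eq[OF phic[OF g] phic[OF h]] D_nonneg by (simp add: f_def ennreal_plus)
    finally show ?thesis .
  qed
  have upper: "d (f g) (f h) \<le> ennreal lam * word_metric G S g h + ennreal 2"
    if g: "g \<in> carrier G" and h: "h \<in> carrier G" for g h
  proof -
    obtain ss where ss: "set ss \<subseteq> S" "h = g \<otimes> word_prod G ss"
        "word_metric G S g h = of_nat (length ss)"
      using grp.word_metric_witness[OF gS g h] by blast
    have "D (\<phi> g c) (\<phi> h c) \<le> real (length ss) * K"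
      using word_bound[OF g, of ss K] ss Sc Kb by auto
    also have "\<dots> \<le> lam * real (length ss)" using Kl by (simp add: mult.commute mult_right_mono)
    finally have b: "D (\<phi> g c) (\<phi> h c) \<le> lam * real (length ss) + 2" by simp
    have "d (f g) (f h) = ennreal (D (\<phi> g c) (\<phi> h c))"
      using d_eq[OF phic[OF g] phic[OF h]] by (simp add: f_def)
    also have "\<dots> \<le> ennreal (lam * real (length ss) + 2)" using b by (rule ennreal_leI)
    also have "\<dots> = ennreal lam * word_metric G S g h + ennreal 2"
      using lam1 ss(3) by (simp add: ennreal_plus ennreal_mult ennreal_of_nat_eq_real_of_nat)
    finally show ?thesis .
  qed
  have fX: "f ` carrier G \<subseteq> X" unfolding f_def using phic by blast
  have qe: "qi_embedding (carrier G) (word_metric G S) X d f lam 2"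
    unfolding qi_embedding_def using lam1 lower upper fX by auto
  have qd: "quasi_dense X d r (f ` carrier G)"
    unfolding quasi_dense_def
  proof
    fix x assume x: "x \<in> X"
    obtain g where "g \<in> carrier G" "d x (\<phi> g c) \<le> ennreal r" "d (\<phi> g c) x \<le> ennreal r"
      using near[OF x] by blast
    then show "\<exists>y\<in>f ` carrier G. max (d x y) (d y x) \<le> ennreal r" by (auto simp: f_def)
  qed
  show ?thesis unfolding quasi_isometric_def quasi_isometry_def using qe qd r0 by blast
qed

lemma qm_part:
  assumes fS0: "finite S0"
  shows "quasi_metric X d"
proof -
  define K where "K = (\<Sum>s\<in>S0. D (\<phi> s c) c)"
  have K0: "0 \<le> K" unfolding K_def by (simp add: D_nonneg sum_nonneg)
  have Kb: "D (\<phi> s c) c \<le> K" if "s \<in> S0" for s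
    unfolding K_def using that fS0 by (intro member_le_sum) (auto simp: D_nonneg)
  define lam where "lam = 1 + K"
  define eps where "eps = 2 * r + lam * (2 * r + 2)"
  have lam1: "1 \<le> lam" using K0 by (simp add: lam_def)
  have eps0: "0 \<le> eps" using r0 lam1 unfolding eps_def by simp
  have main: "d y x \<le> ennreal lam * d x y + ennreal eps" if x: "x \<in> X" and y: "y \<in> X" for x y
  proof -
    obtain g where g: "g \<in> carrier G" "D x (\<phi> g c) \<le> r" "D (\<phi> g c) x \<le> r" using near_D[OF x] by blast
    obtain h where h: "h \<in> carrier G" "D y (\<phi> h c) \<le> r" "D (\<phi> h c) y \<le> r" using near_D[OF y] by blast
    define k where "k = inv g \<otimes> h"
    have k: "k \<in> carrier G" using g h by (simp add: k_def)
    obtain ts where ts: "set ts \<subseteq> S0" "real (length ts) \<le> D c (\<phi> k c) + 2" "k = word_prod G ts"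
      using W[OF k] by blast
    have Dk: "D c (\<phi> k c) = D (\<phi> g c) (\<phi> h c)" using key[OF g(1) h(1)] by (simp add: k_def)
    have tsc: "set ts \<subseteq> carrier G" using ts(1) S0_carrier by blast
    have "h = g \<otimes> (inv g \<otimes> h)" using g h by (simp add: grp.m_assoc[symmetric])
    then have hk: "h = g \<otimes> word_prod G ts" using ts(3) by (simp add: k_def)
    have rb: "D (\<phi> h c) (\<phi> g c) \<le> real (length ts) * K"
      using word_bound_rev[OF g(1) tsc, of K] ts(1) Kb hk by auto
    have gX: "\<phi> g c \<in> X" and hX: "\<phi> h c \<in> X" using phic[OF g(1)] phic[OF h(1)] by auto
    have "D (\<phi> g c) (\<phi> h c) \<le> D (\<phi> g c) x + D x (\<phi> h c)" by (rule D_tri[OF gX x hX])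
    moreover have "D x (\<phi> h c) \<le> D x y + D y (\<phi> h c)" by (rule D_tri[OF x y hX])
    ultimately have gh: "D (\<phi> g c) (\<phi> h c) \<le> 2 * r + D x y" using g h by linarith
    have "real (length ts) * K \<le> (2 * r + D x y + 2) * K"
      using ts(2) Dk gh K0 by (intro mult_right_mono) auto
    then have hg: "D (\<phi> h c) (\<phi> g c) \<le> (2 * r + D x y + 2) * K" using rb by linarith
    have "D y x \<le> D y (\<phi> h c) + D (\<phi> h c) x" by (rule D_tri[OF y hX x])
    moreover have "D (\<phi> h c) x \<le> D (\<phi> h c) (\<phi> g c) + D (\<phi> g c) x" by (rule D_tri[OF hX gX x])
    ultimately have "D y x \<le> 2 * r + (2 * r + D x y + 2) * K" using g h hg by linarith
    also have "\<dots> \<le> lam * D x y + eps"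
      using K0 r0 D_nonneg[of x y] unfolding lam_def eps_def by (simp add: algebra_simps)
    finally have b: "D y x \<le> lam * D x y + eps" .
    have "d y x = ennreal (D y x)" using d_eq y x by simp
    also have "\<dots> \<le> ennreal (lam * D x y + eps)" using b by (rule ennreal_leI)
    also have "\<dots> = ennreal lam * d x y + ennreal eps"
      using lam1 eps0 D_nonneg[of x y] d_eq[OF x y] by (simp add: ennreal_plus ennreal_mult)
    finally show ?thesis .
  qed
  have sc: "strongly_connected X d"
    unfolding strongly_connected_def is_basepoint_def using finite_d by blast
  show ?thesis unfolding quasi_metric_def using sm sc main lam1 eps0 by blast
qed

end

theorem theorem3p5:
  fixes G :: "('g, 'm) monoid_scheme" and X :: "'a set"
    and d :: "'a \<Rightarrow> 'a \<Rightarrow> ennreal" and \<phi> :: "'g \<Rightarrow> 'a \<Rightarrow> 'a"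
  assumes "group G"
    and "semimetric X d"
    and "geodesic_semimetric X d"
    and "has_basepoint X d"
    and "isometric_action G X d \<phi>"
    and "cocompact_action G X d \<phi>"
    and "outward_proper G X d \<phi> \<or> inward_proper G X d \<phi>"
  shows "(\<exists>S. finite S \<and> generates_monoid G S)
       \<and> (\<forall>S. finite S \<and> generates_monoid G S \<longrightarrow>
              quasi_isometric (carrier G) (word_metric G S) X d)
       \<and> quasi_metric X d"
proof -
  have act: "group_action G X \<phi>" and iso: "\<forall>g\<in>carrier G. \<forall>x\<in>X. \<forall>y\<in>X. d (\<phi> g x) (\<phi> g y) = d x y"
    using assms(5) unfolding isometric_action_def by auto
  obtain c r where c: "c \<in> X" "r \<ge> 0" "X = (\<Union>g\<in>carrier G. \<phi> g ` strong_ball X d r c)"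
    using assms(6) unfolding cocompact_action_def by blast
  interpret SM G X \<phi> d c r
    by (rule SM.intro[OF act SM_axioms.intro[OF iso assms(2) assms(3) assms(4) c(1) c(2) c(3)]])
  have f: "finite S0" using S0_finite assms(7) by blast
  show ?thesis using f S0_gen qi_part[OF _ _ f] qm_part[OF f] by blast
qed

end
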